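(* Suppose the p-values are conditionally super-uniform: for every $t$ with $\theta_t=0$, $\mathbb{P}(p_t\le U\mid\mathcal{F}_{t-1})\le U$ a.s. for every $\mathcal F_{t-1}$-measurable $[0,1]$-valued $U$. Fix $d\in(0,1]$. (a) If the $\mathcal{F}_{t-1}$-measurable testing levels satisfy, a.s. for every $t\ge1$, $\sum_{j=1}^t\frac{\alpha_j}{dR^{\mathrm d}_{j-1}+1}\le\alpha$, then $\mathrm{mem\text{-}FDR}(t)\le\alpha$ for all $t$. (b) Let $(\lambda_t)_{t\ge1}$ be $(0,1)$-valued with each $\lambda_t$ $\mathcal{F}_{t-1}$-measurable, and let $\mathrm{mem\text{-}}\widehat{\mathrm{FDP}}^{\mathrm{pS\text{-}RAI}}(t):=\sum_{j=1}^t\frac{\alpha_j}{dR^{\mathrm d}_{j-1}+1}\cdot\frac{\mathbb{1}\{p_j>\lambda_j\}}{1-\lambda_j}$. Then (i) $\mathbb{E}[\mathrm{mem\text{-}}\widehat{\mathrm{FDP}}^{\mathrm{pS\text{-}RAI}}(t)]\ge\mathbb{E}[\mathrm{mem\text{-}FDP}^*(t)]$ for all $t$, where $\mathrm{mem\text{-}FDP}^*(t)=\sum_{j\in\mathcal{H}_0(t)}\alpha_j/(dR^{\mathrm d}_{j-1}+1)$; and (ii) if the testing levels satisfy $\mathrm{mem\text{-}}\widehat{\mathrm{FDP}}^{\mathrm{pS\text{-}RAI}}(t)\le\alpha$ a.s. for every $t$, then $\mathrm{mem\text{-}FDR}(t)\le\alpha$ for all $t$.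
   Context: Let $\alpha\in(0,1)$ be a target level. Hypotheses are indexed by $t=1,2,\dots$; $\theta_t\in\{0,1\}$ is a fixed (non-random) indicator with $\theta_t=0$ iff the $t$-th null hypothesis is true. $p_1,p_2,\dots$ are $[0,1]$-valued random variables (p-values). Testing levels $\alpha_1,\alpha_2,\dots$ are $[0,1]$-valued random variables and the decisions are $\delta_t=\mathbb{1}\{p_t\le\alpha_t\}$. Let $\mathcal{F}_t=\sigma(\delta_1,\dots,\delta_t)$, $\mathcal{F}_0$ trivial; each $\alpha_t$ is required to be $\mathcal{F}_{t-1}$-measurable. $\mathcal{H}_0(t)=\{j\le t:\theta_j=0\}$. For a decay parameter $d\in(0,1]$, $R^{\mathrm d}_t=\sum_{j=1}^t d^{t-j}\delta_j$ with $R^{\mathrm d}_0=0$, and $\mathrm{mem\text{-}FDR}(t)=\mathbb{E}\big[\sum_{j\in\mathcal{H}_0(t)}d^{t-j}\delta_j\big/R^{\mathrm d}_t\big]$ with the convention $0/0=0$. *)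

theory Defs
  imports "HOL-Probability.Probability"
begin

definition rej :: "(nat \<Rightarrow> 'a \<Rightarrow> real) \<Rightarrow> (nat \<Rightarrow> 'a \<Rightarrow> real) \<Rightarrow> nat \<Rightarrow> 'a \<Rightarrow> real" where
  "rej p a j \<omega> = (if p j \<omega> \<le> a j \<omega> then 1 else 0)"

definition filt :: "'a measure \<Rightarrow> (nat \<Rightarrow> 'a \<Rightarrow> real) \<Rightarrow> (nat \<Rightarrow> 'a \<Rightarrow> real) \<Rightarrow> nat \<Rightarrow> 'a measure" where
  "filt M p a t = sigma (space M)
     (\<Union>j\<in>{1..t}. {rej p a j -` B \<inter> space M | B. B \<in> sets borel})"

definition memR :: "real \<Rightarrow> (nat \<Rightarrow> 'a \<Rightarrow> real) \<Rightarrow> (nat \<Rightarrow> 'a \<Rightarrow> real) \<Rightarrow> nat \<Rightarrow> 'a \<Rightarrow> real" where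
  "memR d p a t \<omega> = (\<Sum>j=1..t. d ^ (t - j) * rej p a j \<omega>)"

definition H0 :: "(nat \<Rightarrow> nat) \<Rightarrow> nat \<Rightarrow> nat set" where
  "H0 \<theta> t = {j \<in> {1..t}. \<theta> j = 0}"

text \<open>mem-FDR(t); division by zero is 0 in Isabelle, matching 0/0 = 0.\<close>
definition memFDR :: "'a measure \<Rightarrow> real \<Rightarrow> (nat \<Rightarrow> nat) \<Rightarrow> (nat \<Rightarrow> 'a \<Rightarrow> real) \<Rightarrow> (nat \<Rightarrow> 'a \<Rightarrow> real) \<Rightarrow> nat \<Rightarrow> real" where
  "memFDR M d \<theta> p a t =
     integral\<^sup>L M (\<lambda>\<omega>. (\<Sum>j\<in>H0 \<theta> t. d ^ (t - j) * rej p a j \<omega>) / memR d p a t \<omega>)"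

definition memFDPstar :: "real \<Rightarrow> (nat \<Rightarrow> nat) \<Rightarrow> (nat \<Rightarrow> 'a \<Rightarrow> real) \<Rightarrow> (nat \<Rightarrow> 'a \<Rightarrow> real) \<Rightarrow> nat \<Rightarrow> 'a \<Rightarrow> real" where
  "memFDPstar d \<theta> p a t \<omega> = (\<Sum>j\<in>H0 \<theta> t. a j \<omega> / (d * memR d p a (j - 1) \<omega> + 1))"

definition memFDPhat :: "real \<Rightarrow> (nat \<Rightarrow> 'a \<Rightarrow> real) \<Rightarrow> (nat \<Rightarrow> 'a \<Rightarrow> real) \<Rightarrow> (nat \<Rightarrow> 'a \<Rightarrow> real) \<Rightarrow> nat \<Rightarrow> 'a \<Rightarrow> real" where
  "memFDPhat d p a lam t \<omega> = (\<Sum>j=1..t. a j \<omega> / (d * memR d p a (j - 1) \<omega> + 1)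
        * (if p j \<omega> > lam j \<omega> then 1 else 0) / (1 - lam j \<omega>))"

end

theory Submission
  imports Defs
begin

lemma filt_space[simp]: "space (filt M p a t) = space M"
  unfolding filt_def by (rule space_measure_of) auto

lemma filt_sets: "sets (filt M p a t) = sigma_sets (space M)
     (\<Union>j\<in>{1..t}. {rej p a j -` B \<inter> space M | B. B \<in> sets borel})"
  unfolding filt_def by (rule sets_measure_of) auto

lemma filt_mono: "s \<le> t \<Longrightarrow> sets (filt M p a s) \<subseteq> sets (filt M p a t)"
  unfolding filt_sets by (rule sigma_sets_mono') (auto, metis atLeastAtMost_iff order_trans)

lemma meas_filt_mono: "s \<le> t \<Longrightarrow> f \<in> borel_measurable (filt M p a s) \<Longrightarrow> f \<in> borel_measurable (filt M p a t)"
  using measurable_mono[of borel borel "filt M p a s" "filt M p a t"] filt_mono[of s t M p a] by auto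

lemma rej_meas_filt: "1 \<le> j \<Longrightarrow> j \<le> t \<Longrightarrow> rej p a j \<in> borel_measurable (filt M p a t)"
  unfolding measurable_def
  by (auto simp: filt_sets intro!: sigma_sets.Basic) (metis atLeastAtMost_iff)

lemma rej_meas_M:
  assumes "p j \<in> borel_measurable M" "a j \<in> borel_measurable M"
  shows "rej p a j \<in> borel_measurable M"
  unfolding rej_def using assms by measurable

lemma filt_sub:
  assumes p: "\<forall>t\<ge>1. p t \<in> borel_measurable M"
    and a: "\<forall>t\<ge>1. a t \<in> borel_measurable (filt M p a (t - 1))"
  shows "sets (filt M p a t) \<subseteq> sets M"
proof (induction t rule: less_induct)
  case (less t)
  have "rej p a j \<in> borel_measurable M" if "1 \<le> j" "j \<le> t" for j
  proof (rule rej_meas_M)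
    show "p j \<in> borel_measurable M" using p that by auto
    have "j - 1 < t" using that by auto
    then have "sets (filt M p a (j - 1)) \<subseteq> sets M" using less by auto
    then show "a j \<in> borel_measurable M"
      using a that measurable_mono[of borel borel "filt M p a (j-1)" M] by auto
  qed
  then have "(\<Union>j\<in>{1..t}. {rej p a j -` B \<inter> space M | B. B \<in> sets borel}) \<subseteq> sets M"
    by (auto simp: measurable_def)
  then show ?case unfolding filt_sets
    by (simp add: sigma_sets_le_sets_iff)
qed

lemma rej_01: "rej p a j \<omega> = 0 \<or> rej p a j \<omega> = 1"
  unfolding rej_def by auto

lemma rej_nonneg: "0 \<le> rej p a j \<omega>"
  unfolding rej_def by auto

lemma memR_0[simp]: "memR d p a 0 \<omega> = 0"
  unfolding memR_def by simp

lemma memR_Suc: "memR d p a (Suc n) \<omega> = d * memR d p a n \<omega> + rej p a (Suc n) \<omega>"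
proof -
  have "memR d p a (Suc n) \<omega> = (\<Sum>j=1..n. d ^ (Suc n - j) * rej p a j \<omega>) + rej p a (Suc n) \<omega>"
    unfolding memR_def by (simp add: sum.atLeast1_atMost_eq)
  also have "(\<Sum>j=1..n. d ^ (Suc n - j) * rej p a j \<omega>) = d * memR d p a n \<omega>"
    unfolding memR_def sum_distrib_left
    by (rule sum.cong) (auto simp: Suc_diff_le)
  finally show ?thesis .
qed

lemma memR_nonneg: "0 \<le> d \<Longrightarrow> 0 \<le> memR d p a t \<omega>"
  unfolding memR_def by (auto intro!: sum_nonneg simp: rej_nonneg)

lemma memR_shift: "0 \<le> d \<Longrightarrow> d \<le> 1 \<Longrightarrow> d ^ k * memR d p a j \<omega> \<le> memR d p a (j + k) \<omega>"
proof (induction k)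
  case 0 then show ?case by simp
next
  case (Suc k)
  have "d ^ Suc k * memR d p a j \<omega> = d * (d ^ k * memR d p a j \<omega>)" by simp
  also have "\<dots> \<le> d * memR d p a (j + k) \<omega>" using Suc by (simp add: mult_left_mono)
  also have "\<dots> \<le> memR d p a (j + Suc k) \<omega>" by (simp add: memR_Suc rej_nonneg)
  finally show ?case .
qed

lemma memR_meas: "memR d p a n \<in> borel_measurable (filt M p a n)"
  unfolding memR_def
  by (intro borel_measurable_sum borel_measurable_times borel_measurable_const rej_meas_filt) auto

lemma fdr_pointwise:
  assumes "0 < d" "d \<le> 1"
  shows "(\<Sum>j\<in>H0 \<theta> t. d ^ (t - j) * rej p a j \<omega>) / memR d p a t \<omega>
     \<le> (\<Sum>j\<in>H0 \<theta> t. rej p a j \<omega> / (d * memR d p a (j - 1) \<omega> + 1))"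
proof (cases "memR d p a t \<omega> = 0")
  case True
  then show ?thesis using assms
    by (auto intro!: sum_nonneg divide_nonneg_pos simp: rej_nonneg memR_nonneg add_nonneg_pos)
next
  case False
  then have Rpos: "0 < memR d p a t \<omega>" using memR_nonneg[of d p a t \<omega>] assms by auto
  have "(\<Sum>j\<in>H0 \<theta> t. d ^ (t - j) * rej p a j \<omega>) / memR d p a t \<omega>
     = (\<Sum>j\<in>H0 \<theta> t. d ^ (t - j) * rej p a j \<omega> / memR d p a t \<omega>)"
    by (simp add: sum_divide_distrib)
  also have "\<dots> \<le> (\<Sum>j\<in>H0 \<theta> t. rej p a j \<omega> / (d * memR d p a (j - 1) \<omega> + 1))"
  proof (rule sum_mono)
    fix j assume "j \<in> H0 \<theta> t"
    then have j: "1 \<le> j" "j \<le> t" unfolding H0_def by auto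
    then obtain i where i: "j = Suc i" by (cases j) auto
    have pos: "0 < d * memR d p a i \<omega> + 1" using assms memR_nonneg[of d p a i \<omega>]
      by (simp add: add_nonneg_pos)
    have "d ^ (t - j) * memR d p a j \<omega> \<le> memR d p a (j + (t - j)) \<omega>"
      using memR_shift[of d "t - j" p a j \<omega>] assms by simp
    then have key: "d ^ (t - j) * (d * memR d p a i \<omega> + rej p a j \<omega>) \<le> memR d p a t \<omega>"
      using j i by (simp add: memR_Suc)
    show "d ^ (t - j) * rej p a j \<omega> / memR d p a t \<omega> \<le> rej p a j \<omega> / (d * memR d p a (j - 1) \<omega> + 1)"
    proof (cases "rej p a j \<omega> = 0")
      case True then show ?thesis by simp
    next
      case False
      then have r1: "rej p a j \<omega> = 1" using rej_01 by metis
      have "d ^ (t - j) * (d * memR d p a i \<omega> + 1) \<le> memR d p a t \<omega>" using key r1 by simp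
      then show ?thesis using r1 i Rpos pos
        by (simp add: divide_simps mult.commute)
    qed
  qed
  finally show ?thesis .
qed

lemma sfs_of_prob:
  assumes "prob_space M" "subalgebra M F"
  shows "sigma_finite_subalgebra M F"
proof -
  interpret prob_space M by fact
  have "finite_measure_subalgebra M F" by unfold_locales (fact assms(2))
  then show ?thesis by (rule finite_measure_subalgebra_is_sigma_finite)
qed

lemma int_bdd:
  assumes "prob_space M" "f \<in> borel_measurable M" "\<And>\<omega>. \<omega> \<in> space M \<Longrightarrow> 0 \<le> f \<omega> \<and> f \<omega> \<le> (B::real)"
  shows "integrable M f"
proof -
  interpret prob_space M by fact
  show ?thesis
    by (rule integrable_const_bound[where B=B]) (use assms in \<open>auto intro!: AE_I2\<close>)
qed

lemma ce_L1:
  assumes "prob_space M" "subalgebra M F"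
    and X: "X \<in> borel_measurable F" "\<forall>\<omega>\<in>space M. 0 \<le> X \<omega> \<and> X \<omega> \<le> 1"
    and U: "U \<in> borel_measurable F" "\<forall>\<omega>\<in>space M. 0 \<le> U \<omega> \<and> U \<omega> \<le> 1"
    and B: "B \<in> sets M"
    and ce: "AE \<omega> in M. real_cond_exp M F (indicator B) \<omega> \<le> U \<omega>"
  shows "(\<integral>\<omega>. X \<omega> * indicator B \<omega> \<partial>M) \<le> (\<integral>\<omega>. X \<omega> * U \<omega> \<partial>M)"
proof -
  interpret sigma_finite_subalgebra M F using sfs_of_prob assms by blast
  interpret prob_space M by fact
  have XM: "X \<in> borel_measurable M" using X(1) measurable_from_subalg[OF subalg] by blast
  have UM: "U \<in> borel_measurable M" using U(1) measurable_from_subalg[OF subalg] by blast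
  have iB: "integrable M (\<lambda>\<omega>. X \<omega> * indicator B \<omega>)"
    by (rule integrable_const_bound[where B=1]) (use X B XM in \<open>auto simp: indicator_def\<close>)
  have iU: "integrable M (\<lambda>\<omega>. X \<omega> * U \<omega>)"
    by (rule integrable_const_bound[where B=1]) (use X U XM UM in \<open>auto intro!: mult_le_one\<close>)
  have "(\<integral>\<omega>. X \<omega> * indicator B \<omega> \<partial>M) = (\<integral>\<omega>. X \<omega> * real_cond_exp M F (indicator B) \<omega> \<partial>M)"
    using real_cond_exp_intg(2)[OF iB X(1)] B by simp
  also have "\<dots> \<le> (\<integral>\<omega>. X \<omega> * U \<omega> \<partial>M)"
  proof (rule integral_mono_AE)
    show "integrable M (\<lambda>\<omega>. X \<omega> * real_cond_exp M F (indicator B) \<omega>)"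
      using real_cond_exp_intg(1)[OF iB X(1)] B by simp
    show "integrable M (\<lambda>\<omega>. X \<omega> * U \<omega>)" by fact
    show "AE \<omega> in M. X \<omega> * real_cond_exp M F (indicator B) \<omega> \<le> X \<omega> * U \<omega>"
      using ce X(2) by (auto intro!: mult_left_mono)
  qed
  finally show ?thesis .
qed

lemma ce_L3:
  assumes "prob_space M" "subalgebra M F"
    and B: "B \<in> sets M"
  shows "AE \<omega> in M. real_cond_exp M F (indicator (space M - B)) \<omega> = 1 - real_cond_exp M F (indicator B) \<omega>"
proof -
  interpret sigma_finite_subalgebra M F using sfs_of_prob assms by blast
  interpret prob_space M by fact
  have i1: "integrable M (\<lambda>_. 1::real)" by simp
  have iB: "integrable M (indicator B :: 'a \<Rightarrow> real)"
    by (rule integrable_const_bound[where B=1]) (use B in \<open>auto simp: indicator_def\<close>)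
  have a1: "AE \<omega> in M. real_cond_exp M F (\<lambda>x. 1 - indicator B x) \<omega> = real_cond_exp M F (\<lambda>_. 1) \<omega> - real_cond_exp M F (indicator B) \<omega>"
    using real_cond_exp_diff[OF i1 iB] by simp
  have a2: "AE \<omega> in M. real_cond_exp M F (\<lambda>_. 1) \<omega> = (1::real)"
    using real_cond_exp_F_meas[OF i1] by simp
  have a3: "AE \<omega> in M. real_cond_exp M F (indicator (space M - B)) \<omega> = real_cond_exp M F (\<lambda>x. 1 - indicator B x) \<omega>"
    by (rule real_cond_exp_cong) (use B in \<open>auto simp: indicator_def\<close>)
  show ?thesis using a1 a2 a3 by eventually_elim simp
qed

lemma ce_L2:
  assumes "prob_space M" "subalgebra M F"
    and X: "X \<in> borel_measurable F"
    and B: "B \<in> sets M"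
    and ce: "AE \<omega> in M. c \<omega> \<le> real_cond_exp M F (indicator B) \<omega>"
  shows "(\<integral>\<^sup>+\<omega>. ennreal (X \<omega>) * ennreal (c \<omega>) \<partial>M) \<le> (\<integral>\<^sup>+\<omega>. ennreal (X \<omega>) * ennreal (indicator B \<omega>) \<partial>M)"
proof -
  interpret sigma_finite_subalgebra M F using sfs_of_prob assms by blast
  let ?g = "\<lambda>\<omega>. ennreal (indicator B \<omega>)"
  have gM: "?g \<in> borel_measurable M" using B by measurable
  have XF: "(\<lambda>\<omega>. ennreal (X \<omega>)) \<in> borel_measurable F" using X by measurable
  have "AE \<omega> in M. ennreal (c \<omega>) \<le> nn_cond_exp M F ?g \<omega>"
    using ce
  proof eventually_elim
    case (elim \<omega>)
    have "real_cond_exp M F (indicator B) \<omega> \<le> enn2real (nn_cond_exp M F ?g \<omega>)"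
      unfolding real_cond_exp_def by simp
    then have "c \<omega> \<le> enn2real (nn_cond_exp M F ?g \<omega>)" using elim by linarith
    then have "ennreal (c \<omega>) \<le> ennreal (enn2real (nn_cond_exp M F ?g \<omega>))" by (rule ennreal_leI)
    also have "\<dots> \<le> nn_cond_exp M F ?g \<omega>" by (cases "nn_cond_exp M F ?g \<omega>") auto
    finally show ?case .
  qed
  then have "(\<integral>\<^sup>+\<omega>. ennreal (X \<omega>) * ennreal (c \<omega>) \<partial>M) \<le> (\<integral>\<^sup>+\<omega>. ennreal (X \<omega>) * nn_cond_exp M F ?g \<omega> \<partial>M)"
    by (intro nn_integral_mono_AE) (auto elim!: eventually_mono intro: mult_left_mono)
  also have "\<dots> = (\<integral>\<^sup>+\<omega>. ennreal (X \<omega>) * ?g \<omega> \<partial>M)"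
    by (rule nn_cond_exp_intg[OF XF gM])
  finally show ?thesis .
qed

theorem proposition5:
  fixes M :: "'a measure"
    and p a :: "nat \<Rightarrow> 'a \<Rightarrow> real"
    and \<theta> :: "nat \<Rightarrow> nat"
    and alpha d :: real
  assumes "prob_space M"
    and "0 < alpha" and "alpha < 1"
    and "0 < d" and "d \<le> 1"
    and "\<forall>t. \<theta> t \<in> {0, 1}"
    and "\<forall>t\<ge>1. p t \<in> borel_measurable M"
    and "\<forall>t\<ge>1. \<forall>\<omega>\<in>space M. 0 \<le> p t \<omega> \<and> p t \<omega> \<le> 1"
    and "\<forall>t\<ge>1. a t \<in> borel_measurable (filt M p a (t - 1))"
    and "\<forall>t\<ge>1. \<forall>\<omega>\<in>space M. 0 \<le> a t \<omega> \<and> a t \<omega> \<le> 1"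
    and superunif: "\<forall>t\<ge>1. \<theta> t = 0 \<longrightarrow>
          (\<forall>U. U \<in> borel_measurable (filt M p a (t - 1))
               \<and> (\<forall>\<omega>\<in>space M. 0 \<le> U \<omega> \<and> U \<omega> \<le> 1) \<longrightarrow>
             (AE \<omega> in M. real_cond_exp M (filt M p a (t - 1))
                  (indicator {\<omega>\<in>space M. p t \<omega> \<le> U \<omega>}) \<omega> \<le> U \<omega>))"
  shows "((\<forall>t\<ge>1. AE \<omega> in M. (\<Sum>j=1..t. a j \<omega> / (d * memR d p a (j - 1) \<omega> + 1)) \<le> alpha)
            \<longrightarrow> (\<forall>t. memFDR M d \<theta> p a t \<le> alpha))
       \<and> (\<forall>lam :: nat \<Rightarrow> 'a \<Rightarrow> real.
            (\<forall>t\<ge>1. lam t \<in> borel_measurable (filt M p a (t - 1))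
                  \<and> (\<forall>\<omega>\<in>space M. 0 < lam t \<omega> \<and> lam t \<omega> < 1)) \<longrightarrow>
            (\<forall>t. (\<integral>\<^sup>+\<omega>. ennreal (memFDPhat d p a lam t \<omega>) \<partial>M)
                  \<ge> (\<integral>\<^sup>+\<omega>. ennreal (memFDPstar d \<theta> p a t \<omega>) \<partial>M))
          \<and> ((\<forall>t\<ge>1. AE \<omega> in M. memFDPhat d p a lam t \<omega> \<le> alpha)
               \<longrightarrow> (\<forall>t. memFDR M d \<theta> p a t \<le> alpha)))"
proof -
  note pM = assms(1)
  interpret prob_space M by fact
  have dpos: "0 < d" "d \<le> 1" using assms by auto
  have pmeas: "\<forall>t\<ge>1. p t \<in> borel_measurable M" by fact
  have p01: "\<forall>t\<ge>1. \<forall>\<omega>\<in>space M. 0 \<le> p t \<omega> \<and> p t \<omega> \<le> 1" by fact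
  have ameasF: "\<forall>t\<ge>1. a t \<in> borel_measurable (filt M p a (t - 1))" by fact
  have a01: "\<forall>t\<ge>1. \<forall>\<omega>\<in>space M. 0 \<le> a t \<omega> \<and> a t \<omega> \<le> 1" by fact
  have sub: "\<And>t. subalgebra M (filt M p a t)"
    unfolding subalgebra_def using filt_sub[OF pmeas ameasF] by simp
  have toM: "\<And>f t. f \<in> borel_measurable (filt M p a t) \<Longrightarrow> f \<in> borel_measurable M"
    using measurable_from_subalg[OF sub] by blast
  have aM: "\<And>j. 1 \<le> j \<Longrightarrow> a j \<in> borel_measurable M" using ameasF toM by blast
  have pM': "\<And>j. 1 \<le> j \<Longrightarrow> p j \<in> borel_measurable M" using pmeas by blast
  have RM: "\<And>n. memR d p a n \<in> borel_measurable M" using memR_meas toM by blast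
  have rejM: "\<And>j. 1 \<le> j \<Longrightarrow> rej p a j \<in> borel_measurable M"
    using rej_meas_M aM pM' by blast
  have Rnn: "\<And>n \<omega>. 0 \<le> memR d p a n \<omega>" by (rule memR_nonneg) (use dpos in simp)
  have den_pos: "\<And>n \<omega>. 0 < d * memR d p a n \<omega> + 1"
    using Rnn dpos by (simp add: add_nonneg_pos)
  have denM: "\<And>n. (\<lambda>\<omega>. d * memR d p a n \<omega> + 1) \<in> borel_measurable M"
    using RM by (intro borel_measurable_add borel_measurable_times borel_measurable_const) auto
  have H0_sub: "\<And>t. H0 \<theta> t \<subseteq> {1..t}" unfolding H0_def by auto
  have H0_fin: "\<And>t. finite (H0 \<theta> t)" using H0_sub finite_subset by blast
  have H0_mem: "\<And>t j. j \<in> H0 \<theta> t \<Longrightarrow> 1 \<le> j \<and> \<theta> j = 0" unfolding H0_def by auto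
  have invF: "\<And>j. (\<lambda>\<omega>. 1 / (d * memR d p a (j - 1) \<omega> + 1)) \<in> borel_measurable (filt M p a (j - 1))"
    using memR_meas by measurable
  have cF: "\<And>j. 1 \<le> j \<Longrightarrow> (\<lambda>\<omega>. a j \<omega> / (d * memR d p a (j - 1) \<omega> + 1)) \<in> borel_measurable (filt M p a (j - 1))"
    using memR_meas ameasF
    by (intro borel_measurable_divide borel_measurable_add borel_measurable_times borel_measurable_const) auto
  have c01: "\<And>j \<omega>. 1 \<le> j \<Longrightarrow> \<omega> \<in> space M \<Longrightarrow> 0 \<le> a j \<omega> / (d * memR d p a (j - 1) \<omega> + 1) \<and> a j \<omega> / (d * memR d p a (j - 1) \<omega> + 1) \<le> 1"
  proof -
    fix j :: nat and \<omega> assume "1 \<le> j" "\<omega> \<in> space M"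
    then have "0 \<le> a j \<omega>" "a j \<omega> \<le> 1" using a01 by auto
    moreover have "1 \<le> d * memR d p a (j - 1) \<omega> + 1" using Rnn dpos by simp
    ultimately show "0 \<le> a j \<omega> / (d * memR d p a (j - 1) \<omega> + 1) \<and> a j \<omega> / (d * memR d p a (j - 1) \<omega> + 1) \<le> 1"
      by (auto simp: divide_simps)
  qed
  have cint: "integrable M (\<lambda>\<omega>. a j \<omega> / (d * memR d p a (j - 1) \<omega> + 1))" if "1 \<le> j" for j
    by (rule int_bdd[OF pM toM[OF cF[OF that]], where B=1]) (use c01 that in auto)
  have r01: "\<And>j \<omega>. 0 \<le> rej p a j \<omega> / (d * memR d p a (j - 1) \<omega> + 1) \<and> rej p a j \<omega> / (d * memR d p a (j - 1) \<omega> + 1) \<le> 1"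
  proof -
    fix j :: nat and \<omega>
    have "1 \<le> d * memR d p a (j - 1) \<omega> + 1" using Rnn dpos by simp
    then show "0 \<le> rej p a j \<omega> / (d * memR d p a (j - 1) \<omega> + 1) \<and> rej p a j \<omega> / (d * memR d p a (j - 1) \<omega> + 1) \<le> 1"
      using rej_01[of p a j \<omega>] by (auto simp: divide_simps)
  qed
  have rint: "\<And>j. 1 \<le> j \<Longrightarrow> integrable M (\<lambda>\<omega>. rej p a j \<omega> / (d * memR d p a (j - 1) \<omega> + 1))"
    by (rule int_bdd[OF pM, where B=1]) (use r01 rejM RM in measurable)

  have stepA: "(\<integral>\<omega>. rej p a j \<omega> / (d * memR d p a (j - 1) \<omega> + 1) \<partial>M)
      \<le> (\<integral>\<omega>. a j \<omega> / (d * memR d p a (j - 1) \<omega> + 1) \<partial>M)" if j: "1 \<le> j" "\<theta> j = 0" for j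
  proof -
    let ?B = "{\<omega>\<in>space M. p j \<omega> \<le> a j \<omega>}"
    have BM: "?B \<in> sets M" using aM pM' j by measurable
    have ce: "AE \<omega> in M. real_cond_exp M (filt M p a (j - 1)) (indicator ?B) \<omega> \<le> a j \<omega>"
      using superunif j ameasF a01 by blast
    have L: "(\<integral>\<omega>. (1 / (d * memR d p a (j - 1) \<omega> + 1)) * indicator ?B \<omega> \<partial>M)
        \<le> (\<integral>\<omega>. (1 / (d * memR d p a (j - 1) \<omega> + 1)) * a j \<omega> \<partial>M)"
    proof (rule ce_L1[OF pM sub invF _ _ _ BM ce])
      show "\<forall>\<omega>\<in>space M. 0 \<le> 1 / (d * memR d p a (j - 1) \<omega> + 1) \<and> 1 / (d * memR d p a (j - 1) \<omega> + 1) \<le> 1"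
        using den_pos Rnn dpos by (auto simp: divide_simps)
      show "a j \<in> borel_measurable (filt M p a (j - 1))" using ameasF j by auto
      show "\<forall>\<omega>\<in>space M. 0 \<le> a j \<omega> \<and> a j \<omega> \<le> 1" using a01 j by auto
    qed
    have e1: "(\<integral>\<omega>. (1 / (d * memR d p a (j - 1) \<omega> + 1)) * indicator ?B \<omega> \<partial>M)
       = (\<integral>\<omega>. rej p a j \<omega> / (d * memR d p a (j - 1) \<omega> + 1) \<partial>M)"
      by (rule Bochner_Integration.integral_cong) (auto simp: rej_def indicator_def)
    have e2: "(\<integral>\<omega>. (1 / (d * memR d p a (j - 1) \<omega> + 1)) * a j \<omega> \<partial>M)
       = (\<integral>\<omega>. a j \<omega> / (d * memR d p a (j - 1) \<omega> + 1) \<partial>M)"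
      by (rule Bochner_Integration.integral_cong) auto
    show ?thesis using L e1 e2 by simp
  qed

  have FDR_le: "memFDR M d \<theta> p a t \<le> (\<integral>\<omega>. memFDPstar d \<theta> p a t \<omega> \<partial>M)" for t
  proof -
    let ?f = "\<lambda>\<omega>. (\<Sum>j\<in>H0 \<theta> t. d ^ (t - j) * rej p a j \<omega>) / memR d p a t \<omega>"
    let ?g = "\<lambda>\<omega>. (\<Sum>j\<in>H0 \<theta> t. rej p a j \<omega> / (d * memR d p a (j - 1) \<omega> + 1))"
    have gM: "?g \<in> borel_measurable M"
      using H0_mem by (intro borel_measurable_sum borel_measurable_divide rejM denM) auto
    have fM: "?f \<in> borel_measurable M"
      using H0_mem by (intro borel_measurable_divide borel_measurable_sum RM borel_measurable_times rejM borel_measurable_const) auto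
    have fg: "\<And>\<omega>. ?f \<omega> \<le> ?g \<omega>" by (rule fdr_pointwise) (use dpos in auto)
    have f0: "\<And>\<omega>. 0 \<le> ?f \<omega>" using Rnn dpos
      by (auto intro!: divide_nonneg_nonneg sum_nonneg simp: rej_nonneg)
    have gb: "\<And>\<omega>. ?g \<omega> \<le> real (card (H0 \<theta> t))"
      using sum_mono[of "H0 \<theta> t" "\<lambda>j. rej p a j _ / (d * memR d p a (j - 1) _ + 1)" "\<lambda>_. 1"] r01 by auto
    have g0: "\<And>\<omega>. 0 \<le> ?g \<omega>" using r01 by (auto intro!: sum_nonneg)
    have gi: "integrable M ?g"
      by (rule int_bdd[OF pM gM, where B="real (card (H0 \<theta> t))"]) (use gb g0 in auto)
    have fi: "integrable M ?f"
      by (rule int_bdd[OF pM fM, where B="real (card (H0 \<theta> t))"])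
         (use fg gb f0 in \<open>blast intro: order_trans\<close>)
    have "memFDR M d \<theta> p a t = (\<integral>\<omega>. ?f \<omega> \<partial>M)" unfolding memFDR_def ..
    also have "\<dots> \<le> (\<integral>\<omega>. ?g \<omega> \<partial>M)" by (rule integral_mono[OF fi gi fg])
    also have "\<dots> = (\<Sum>j\<in>H0 \<theta> t. (\<integral>\<omega>. rej p a j \<omega> / (d * memR d p a (j - 1) \<omega> + 1) \<partial>M))"
      by (rule Bochner_Integration.integral_sum) (use rint H0_mem in blast)
    also have "\<dots> \<le> (\<Sum>j\<in>H0 \<theta> t. (\<integral>\<omega>. a j \<omega> / (d * memR d p a (j - 1) \<omega> + 1) \<partial>M))"
      by (rule sum_mono) (use stepA H0_mem in blast)
    also have "\<dots> = (\<integral>\<omega>. memFDPstar d \<theta> p a t \<omega> \<partial>M)"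
      unfolding memFDPstar_def by (rule Bochner_Integration.integral_sum[symmetric]) (use cint H0_mem in blast)
    finally show ?thesis .
  qed

  have star0: "memFDPstar d \<theta> p a 0 = (\<lambda>_. 0)"
    unfolding memFDPstar_def H0_def by (auto simp: fun_eq_iff)

  have starM: "memFDPstar d \<theta> p a t \<in> borel_measurable M" for t
    unfolding memFDPstar_def using H0_mem by (intro borel_measurable_sum borel_measurable_divide aM denM) auto
  have star_nn: "\<And>t \<omega>. \<omega> \<in> space M \<Longrightarrow> 0 \<le> memFDPstar d \<theta> p a t \<omega>"
    unfolding memFDPstar_def using c01 H0_mem by (auto intro!: sum_nonneg)
  have star_le: "\<And>t \<omega>. \<omega> \<in> space M \<Longrightarrow> memFDPstar d \<theta> p a t \<omega> \<le> (\<Sum>j=1..t. a j \<omega> / (d * memR d p a (j - 1) \<omega> + 1))"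
    unfolding memFDPstar_def using c01
    by (intro sum_mono2) (auto simp: H0_def)

  have star_bd: "memFDPstar d \<theta> p a t \<omega> \<le> real t" if "\<omega> \<in> space M" for t \<omega>
  proof -
    have "(\<Sum>j=1..t. a j \<omega> / (d * memR d p a (j - 1) \<omega> + 1)) \<le> (\<Sum>j=1..t. 1)"
      by (rule sum_mono) (use c01 that in auto)
    then show ?thesis using star_le[OF that, of t] by simp
  qed
  have star_int: "integrable M (memFDPstar d \<theta> p a t)" for t
    by (rule int_bdd[OF pM starM, where B="real t"]) (use star_nn star_bd in auto)

  have partBi: "(\<integral>\<^sup>+\<omega>. ennreal (memFDPstar d \<theta> p a t \<omega>) \<partial>M) \<le> (\<integral>\<^sup>+\<omega>. ennreal (memFDPhat d p a lam t \<omega>) \<partial>M)"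
    if lam: "\<forall>t\<ge>1. lam t \<in> borel_measurable (filt M p a (t - 1))
                  \<and> (\<forall>\<omega>\<in>space M. 0 < lam t \<omega> \<and> lam t \<omega> < 1)" for lam t
  proof -
    define h where "h j \<omega> = a j \<omega> / (d * memR d p a (j - 1) \<omega> + 1)
        * (if p j \<omega> > lam j \<omega> then 1 else 0) / (1 - lam j \<omega>)" for j \<omega>
    have hM: "h j \<in> borel_measurable M" if j: "1 \<le> j" for j
    proof -
      have [measurable]: "p j \<in> borel_measurable M" "a j \<in> borel_measurable M"
        "lam j \<in> borel_measurable M" "memR d p a (j - 1) \<in> borel_measurable M"
        using pM' aM RM toM lam j by blast+
      show ?thesis unfolding h_def by measurable
    qed
    have h0: "0 \<le> h j \<omega>" if "1 \<le> j" "\<omega> \<in> space M" for j \<omega>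
    proof -
      have "0 \<le> a j \<omega>" "lam j \<omega> < 1" using a01 lam that by auto
      then show ?thesis unfolding h_def using den_pos[of "j - 1" \<omega>] by auto
    qed
    have stepB: "(\<integral>\<^sup>+\<omega>. ennreal (a j \<omega> / (d * memR d p a (j - 1) \<omega> + 1)) \<partial>M) \<le> (\<integral>\<^sup>+\<omega>. ennreal (h j \<omega>) \<partial>M)"
      if j: "1 \<le> j" "\<theta> j = 0" for j
    proof -
      let ?B = "{\<omega>\<in>space M. p j \<omega> \<le> lam j \<omega>}"
      let ?c = "\<lambda>\<omega>. a j \<omega> / (d * memR d p a (j - 1) \<omega> + 1)"
      let ?X = "\<lambda>\<omega>. ?c \<omega> / (1 - lam j \<omega>)"
      have lamF: "lam j \<in> borel_measurable (filt M p a (j - 1))" using lam j by auto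
      have lam01: "\<forall>\<omega>\<in>space M. 0 \<le> lam j \<omega> \<and> lam j \<omega> \<le> 1" using lam j by (auto simp: less_imp_le)
      have BM: "?B \<in> sets M" using pM'[OF j(1)] toM[OF lamF] by measurable
      have XF: "?X \<in> borel_measurable (filt M p a (j - 1))"
        by (rule borel_measurable_divide[OF cF[OF j(1)]]) (intro borel_measurable_diff borel_measurable_const lamF)
      have ce1: "AE \<omega> in M. real_cond_exp M (filt M p a (j - 1)) (indicator ?B) \<omega> \<le> lam j \<omega>"
        using superunif j lamF lam01 by blast
      have ce: "AE \<omega> in M. 1 - lam j \<omega> \<le> real_cond_exp M (filt M p a (j - 1)) (indicator (space M - ?B)) \<omega>"
        using ce1 ce_L3[OF pM sub[of "j - 1"] BM] by eventually_elim simp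
      have L: "(\<integral>\<^sup>+\<omega>. ennreal (?X \<omega>) * ennreal (1 - lam j \<omega>) \<partial>M) \<le> (\<integral>\<^sup>+\<omega>. ennreal (?X \<omega>) * ennreal (indicator (space M - ?B) \<omega>) \<partial>M)"
        by (rule ce_L2[OF pM sub XF _ ce]) (use BM in auto)
      have e1: "(\<integral>\<^sup>+\<omega>. ennreal (?c \<omega>) \<partial>M) = (\<integral>\<^sup>+\<omega>. ennreal (?X \<omega>) * ennreal (1 - lam j \<omega>) \<partial>M)"
      proof (rule nn_integral_cong)
        fix \<omega> assume w: "\<omega> \<in> space M"
        have l: "lam j \<omega> < 1" using lam j w by auto
        have "0 \<le> ?c \<omega>" using c01 j w by auto
        then have "0 \<le> ?X \<omega>" using l by (simp only: divide_nonneg_pos diff_gt_0_iff_gt)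
        then have "ennreal (?X \<omega>) * ennreal (1 - lam j \<omega>) = ennreal (?X \<omega> * (1 - lam j \<omega>))"
          using l by (intro ennreal_mult[symmetric]) auto
        also have "?X \<omega> * (1 - lam j \<omega>) = ?c \<omega>" using l by simp
        finally show "ennreal (?c \<omega>) = ennreal (?X \<omega>) * ennreal (1 - lam j \<omega>)" by simp
      qed
      have e2: "(\<integral>\<^sup>+\<omega>. ennreal (?X \<omega>) * ennreal (indicator (space M - ?B) \<omega>) \<partial>M) = (\<integral>\<^sup>+\<omega>. ennreal (h j \<omega>) \<partial>M)"
        by (rule nn_integral_cong) (auto simp: h_def indicator_def)
      show ?thesis using L e1 e2 by simp
    qed
    have cM: "(\<lambda>\<omega>. a j \<omega> / (d * memR d p a (j - 1) \<omega> + 1)) \<in> borel_measurable M" if "1 \<le> j" for j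
      using toM[OF cF[OF that]] .
    have "(\<integral>\<^sup>+\<omega>. ennreal (memFDPstar d \<theta> p a t \<omega>) \<partial>M)
        = (\<integral>\<^sup>+\<omega>. (\<Sum>j\<in>H0 \<theta> t. ennreal (a j \<omega> / (d * memR d p a (j - 1) \<omega> + 1))) \<partial>M)"
    proof (rule nn_integral_cong)
      fix \<omega> assume w: "\<omega> \<in> space M"
      show "ennreal (memFDPstar d \<theta> p a t \<omega>) = (\<Sum>j\<in>H0 \<theta> t. ennreal (a j \<omega> / (d * memR d p a (j - 1) \<omega> + 1)))"
        unfolding memFDPstar_def using c01 H0_mem w by (subst sum_ennreal) auto
    qed
    also have "\<dots> = (\<Sum>j\<in>H0 \<theta> t. (\<integral>\<^sup>+\<omega>. ennreal (a j \<omega> / (d * memR d p a (j - 1) \<omega> + 1)) \<partial>M))"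
      by (rule nn_integral_sum) (use cM H0_mem in auto)
    also have "\<dots> \<le> (\<Sum>j\<in>H0 \<theta> t. (\<integral>\<^sup>+\<omega>. ennreal (h j \<omega>) \<partial>M))"
      by (rule sum_mono) (use stepB H0_mem in blast)
    also have "\<dots> \<le> (\<Sum>j\<in>{1..t}. (\<integral>\<^sup>+\<omega>. ennreal (h j \<omega>) \<partial>M))"
      by (rule sum_mono2) (use H0_sub in auto)
    also have "\<dots> = (\<integral>\<^sup>+\<omega>. (\<Sum>j\<in>{1..t}. ennreal (h j \<omega>)) \<partial>M)"
      by (rule nn_integral_sum[symmetric]) (use hM in auto)
    also have "\<dots> = (\<integral>\<^sup>+\<omega>. ennreal (memFDPhat d p a lam t \<omega>) \<partial>M)"
    proof (rule nn_integral_cong)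
      fix \<omega> assume w: "\<omega> \<in> space M"
      show "(\<Sum>j\<in>{1..t}. ennreal (h j \<omega>)) = ennreal (memFDPhat d p a lam t \<omega>)"
        unfolding memFDPhat_def h_def[symmetric] using h0 w by (subst sum_ennreal) auto
    qed
    finally show ?thesis .
  qed

  show ?thesis
  proof (intro conjI allI impI)
    fix t
    assume H: "\<forall>t\<ge>1. AE \<omega> in M. (\<Sum>j=1..t. a j \<omega> / (d * memR d p a (j - 1) \<omega> + 1)) \<le> alpha"
    show "memFDR M d \<theta> p a t \<le> alpha"
    proof (cases "t = 0")
      case True
      then show ?thesis using FDR_le[of 0] star0 assms(2) by simp
    next
      case False
      have "(\<integral>\<omega>. memFDPstar d \<theta> p a t \<omega> \<partial>M) \<le> (\<integral>\<omega>. alpha \<partial>M)"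
      proof (rule integral_mono_AE)
        show "integrable M (memFDPstar d \<theta> p a t)" by (rule star_int)
        show "integrable M (\<lambda>\<omega>. alpha)" by simp
        show "AE \<omega> in M. memFDPstar d \<theta> p a t \<omega> \<le> alpha"
        proof -
          have "AE \<omega> in M. (\<Sum>j=1..t. a j \<omega> / (d * memR d p a (j - 1) \<omega> + 1)) \<le> alpha"
            using H False by simp
          moreover have "AE \<omega> in M. \<omega> \<in> space M" by simp
          ultimately show ?thesis
          proof eventually_elim
            case (elim \<omega>) then show ?case using star_le[of \<omega> t] by linarith
          qed
        qed
      qed
      then show ?thesis using FDR_le[of t] by (simp add: prob_space)
    qed
  next
    fix lam :: "nat \<Rightarrow> 'a \<Rightarrow> real" and t
    assume lam: "\<forall>t\<ge>1. lam t \<in> borel_measurable (filt M p a (t - 1))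
                  \<and> (\<forall>\<omega>\<in>space M. 0 < lam t \<omega> \<and> lam t \<omega> < 1)"
    show "(\<integral>\<^sup>+\<omega>. ennreal (memFDPhat d p a lam t \<omega>) \<partial>M) \<ge> (\<integral>\<^sup>+\<omega>. ennreal (memFDPstar d \<theta> p a t \<omega>) \<partial>M)"
      using partBi[OF lam] by simp
  next
    fix lam :: "nat \<Rightarrow> 'a \<Rightarrow> real" and t
    assume lam: "\<forall>t\<ge>1. lam t \<in> borel_measurable (filt M p a (t - 1))
                  \<and> (\<forall>\<omega>\<in>space M. 0 < lam t \<omega> \<and> lam t \<omega> < 1)"
    assume H: "\<forall>t\<ge>1. AE \<omega> in M. memFDPhat d p a lam t \<omega> \<le> alpha"
    show "memFDR M d \<theta> p a t \<le> alpha"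
    proof (cases "t = 0")
      case True
      then show ?thesis using FDR_le[of 0] star0 assms(2) by simp
    next
      case False
      have "(\<integral>\<^sup>+\<omega>. ennreal (memFDPhat d p a lam t \<omega>) \<partial>M) \<le> (\<integral>\<^sup>+\<omega>. ennreal alpha \<partial>M)"
      proof (rule nn_integral_mono_AE)
        have "AE \<omega> in M. memFDPhat d p a lam t \<omega> \<le> alpha" using H False by simp
        then show "AE \<omega> in M. ennreal (memFDPhat d p a lam t \<omega>) \<le> ennreal alpha"
          by eventually_elim (rule ennreal_leI)
      qed
      also have "\<dots> = ennreal alpha" by (simp add: emeasure_space_1)
      finally have "(\<integral>\<^sup>+\<omega>. ennreal (memFDPstar d \<theta> p a t \<omega>) \<partial>M) \<le> ennreal alpha"
        using partBi[OF lam, of t] by simp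
      then have "(\<integral>\<omega>. memFDPstar d \<theta> p a t \<omega> \<partial>M) \<le> alpha"
        by (intro integral_real_bounded) (use assms(2) in auto)
      then show ?thesis using FDR_le[of t] by simp
    qed
  qed
qed

end
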